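(* Let $M\subseteq\mathbb R^n$ be a bounded manifold admitting a carpeting function $\phi$. Let $V$ be a closed subset of $M$ such that $V\cap U$ has finitely many connected components for every open box $U\subseteq\mathbb R^n$. Then for every sequence $(r_\kappa)_{\kappa\in\mathbb N}$ of positive reals with $r_\kappa\to0$, the sequence $\big(V\cap\phi^{-1}(r_\kappa)\big)_\kappa$ converges to $\operatorname{fr}V$ in the Hausdorff sense, i.e. $\operatorname{fr}V=\lim_\kappa\big(V\cap\phi^{-1}(r_\kappa)\big)$.
   Context: A carpeting function on $M$ is a continuous proper map $\phi:M\to(0,\infty)$ such that $\phi(x)\to0$ as $x\to y$ for every $y$ in the frontier of $M$ taken in the one-point compactification $\mathbb R^n\cup\{\infty\}$. $\operatorname{fr}V=\operatorname{cl}V\setminus V$ (closure in $\mathbb R^n$). For bounded sets $A_\kappa\subseteq\mathbb R^n$, $\lim_\kappa A_\kappa=C$ means $\operatorname{cl}A_\kappa\to C$ in the Hausdorff metric on compact subsets of $\mathbb R^n$ (with $\emptyset$ included, at distance $\infty$ from nonempty sets). A box is a product of nonempty open intervals. *)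

theory Defs
  imports "HOL-Analysis.Analysis"
begin

definition embedded_manifold :: "'a::euclidean_space set \<Rightarrow> bool" where
  "embedded_manifold M \<longleftrightarrow> (\<exists>S::'a set. subspace S \<and>
     (\<forall>x\<in>M. \<exists>U W. openin (top_of_set M) U \<and> x \<in> U \<and>
                   openin (top_of_set S) W \<and> U homeomorphic W))"

definition fr :: "'a::euclidean_space set \<Rightarrow> 'a set" where
  "fr V = closure V - V"

text \<open>Carpeting function: continuous proper map M -> (0,oo) tending to 0 at every point of the
  frontier of M in the one-point compactification (the point at infinity belongs to that
  frontier exactly when M is unbounded).\<close>
definition carpeting :: "'a::euclidean_space set \<Rightarrow> ('a \<Rightarrow> real) \<Rightarrow> bool" where
  "carpeting M \<phi> \<longleftrightarrow>
     continuous_on M \<phi> \<and> (\<forall>x\<in>M. \<phi> x > 0) \<and>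
     (\<forall>K. compact K \<and> K \<subseteq> {0<..} \<longrightarrow> compact (M \<inter> \<phi> -` K)) \<and>
     (\<forall>y \<in> closure M - M. (\<phi> \<longlongrightarrow> 0) (at y within M)) \<and>
     (\<not> bounded M \<longrightarrow> (\<phi> \<longlongrightarrow> 0) (inf at_infinity (principal M)))"

definition hausdist :: "'a::metric_space set \<Rightarrow> 'a set \<Rightarrow> real" where
  "hausdist A B = max (SUP x\<in>A. infdist x B) (SUP y\<in>B. infdist y A)"

text \<open>Hausdorff limit of bounded sets: closures converge to the compact set C in the Hausdorff
  metric on compact subsets, where the empty set is at distance infinity from nonempty sets.\<close>
definition hausdorff_lim :: "(nat \<Rightarrow> 'a::euclidean_space set) \<Rightarrow> 'a set \<Rightarrow> bool" where
  "hausdorff_lim A C \<longleftrightarrow> compact C \<and> (\<forall>k. bounded (A k)) \<and>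
     (if C = {} then eventually (\<lambda>k. A k = {}) sequentially
      else eventually (\<lambda>k. A k \<noteq> {}) sequentially \<and>
           ((\<lambda>k. hausdist (closure (A k)) C) \<longlongrightarrow> 0) sequentially)"

end

theory Submission
  imports Defs
begin

lemma manifold_lc:
  fixes M :: "'a::euclidean_space set"
  assumes "embedded_manifold M"
  shows "locally compact M"
proof -
  obtain S :: "'a set" where S: "subspace S" and
    H: "\<forall>x\<in>M. \<exists>U W. openin (top_of_set M) U \<and> x \<in> U \<and>
                   openin (top_of_set S) W \<and> U homeomorphic W"
    using assms unfolding embedded_manifold_def by blast
  have lcS: "locally compact S" using S closed_subspace closed_imp_locally_compact by blast
  show ?thesis unfolding locally_compact
  proof
    fix x assume "x \<in> M"
    then obtain U W where U: "openin (top_of_set M) U" "x \<in> U"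
      "openin (top_of_set S) W" "U homeomorphic W" using H by blast
    have "locally compact W" using locally_open_subset[OF lcS U(3)] .
    then have "locally compact U" using homeomorphic_local_compactness[OF U(4)] by simp
    then have "\<forall>z\<in>U. \<exists>u v. z \<in> u \<and> u \<subseteq> v \<and> v \<subseteq> U \<and>
                    openin (top_of_set U) u \<and> compact v"
      by (rule locally_compact[THEN iffD1])
    then have "\<exists>u v. x \<in> u \<and> u \<subseteq> v \<and> v \<subseteq> U \<and>
                    openin (top_of_set U) u \<and> compact v" using U(2) by (rule bspec)
    then obtain u v where uv: "x \<in> u" "u \<subseteq> v" "v \<subseteq> U" "openin (top_of_set U) u" "compact v"
      by blast
    have "openin (top_of_set M) u" using openin_trans[OF uv(4) U(1)] .
    moreover have "v \<subseteq> M" using uv(3) U(1) openin_imp_subset by blast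
    ultimately show "\<exists>u v. x \<in> u \<and> u \<subseteq> v \<and> v \<subseteq> M \<and> openin (top_of_set M) u \<and> compact v"
      using uv by blast
  qed
qed

lemma hausdist_le:
  fixes A B :: "'a::metric_space set"
  assumes "A \<noteq> {}" "B \<noteq> {}" "\<forall>x\<in>A. infdist x B \<le> e" "\<forall>y\<in>B. infdist y A \<le> e"
  shows "0 \<le> hausdist A B \<and> hausdist A B \<le> e"
proof -
  have b1: "bdd_above ((\<lambda>x. infdist x B) ` A)" using assms(3) by (auto intro: bdd_aboveI2)
  obtain a where a: "a \<in> A" using assms(1) by blast
  have "0 \<le> infdist a B" by (simp add: infdist_nonneg)
  also have "\<dots> \<le> (SUP x\<in>A. infdist x B)" using cSUP_upper[OF a b1] .
  finally have "0 \<le> hausdist A B" unfolding hausdist_def by simp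
  moreover have "(SUP x\<in>A. infdist x B) \<le> e" using assms(1,3) by (intro cSUP_least) auto
  moreover have "(SUP x\<in>B. infdist x A) \<le> e" using assms(2,4) by (intro cSUP_least) auto
  ultimately show ?thesis unfolding hausdist_def by simp
qed

theorem lemma1p7:
  fixes M V :: "'a::euclidean_space set" and \<phi> :: "'a \<Rightarrow> real" and r :: "nat \<Rightarrow> real"
  assumes "bounded M" and "embedded_manifold M" and "carpeting M \<phi>"
    and "closedin (top_of_set M) V"
    and "\<And>a b. box a b \<noteq> {} \<Longrightarrow> finite (components (V \<inter> box a b))"
    and "\<And>k. r k > 0" and "r \<longlonglongrightarrow> 0"
  shows "hausdorff_lim (\<lambda>k. V \<inter> \<phi> -` {r k}) (fr V)"
proof -
  have cont: "continuous_on M \<phi>" and pos: "\<And>x. x \<in> M \<Longrightarrow> \<phi> x > 0"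
    and lim0: "\<And>y. y \<in> closure M - M \<Longrightarrow> (\<phi> \<longlongrightarrow> 0) (at y within M)"
    using assms(3) unfolding carpeting_def by auto
  obtain T where T: "closed T" "V = M \<inter> T" using assms(4) closedin_closed by blast
  have VM: "V \<subseteq> M" using T by blast
  have bV: "bounded V" using VM assms(1) bounded_subset by blast
  obtain U' O' where UO: "closed U'" "open O'" "M = U' \<inter> O'"
    using locally_compact_closed_Int_open[THEN iffD1, OF manifold_lc[OF assms(2)]] by blast
  have clV: "closure V \<subseteq> T \<inter> U'"
  proof -
    have "V \<subseteq> T \<inter> U'" using T UO by blast
    moreover have "closed (T \<inter> U')" using T(1) UO(1) by (rule closed_Int)
    ultimately show ?thesis by (rule closure_minimal)
  qed
  have frEq: "fr V = closure V - O'"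
    unfolding fr_def using clV T UO by blast
  have frc: "compact (fr V)"
  proof -
    have "closed (closure V - O')" using UO(2) by (simp add: closed_Diff)
    moreover have "bounded (closure V - O')" using bV bounded_closure bounded_subset by blast
    ultimately show ?thesis unfolding frEq by (simp add: compact_eq_bounded_closed)
  qed
  have frM: "fr V \<subseteq> closure M - M"
  proof -
    have "closure V \<subseteq> closure M" by (rule closure_mono[OF VM])
    moreover have "closure V \<subseteq> T" using T(1) by (simp add: closure_minimal T(2))
    ultimately show ?thesis unfolding fr_def using T(2) by blast
  qed
  define A where "A = (\<lambda>k. V \<inter> \<phi> -` {r k})"
  have bA: "\<And>k. bounded (A k)" unfolding A_def by (rule bounded_subset[OF bV]) blast
  have keyA: "\<exists>m>0. \<forall>s. 0 < s \<and> s < m \<longrightarrow> (\<exists>v\<in>V. \<phi> v = s \<and> dist v y < e)"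
    if y: "y \<in> fr V" and e: "e > 0" for y e
  proof -
    obtain a b where ab: "box a b \<subseteq> ball y e" "y \<in> box a b"
      using open_contains_box[of "ball y e" y] e by (metis centre_in_ball open_ball)
    have fin: "finite (components (V \<inter> box a b))" using assms(5) ab(2) by blast
    have "y \<in> closure V" using y unfolding fr_def by blast
    then have "y \<in> closure (V \<inter> box a b)"
      using open_Int_closure_subset[of "box a b" V] ab(2) by (auto simp: Int_commute)
    moreover have "closure (V \<inter> box a b) \<subseteq> \<Union>(closure ` components (V \<inter> box a b))"
    proof -
      have "closed (\<Union>(closure ` components (V \<inter> box a b)))" using fin by (intro closed_Union) auto
      moreover have "V \<inter> box a b \<subseteq> \<Union>(closure ` components (V \<inter> box a b))"
        using closure_subset by (metis Sup_mono Union_components imageI)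
      ultimately show ?thesis by (rule closure_minimal[rotated])
    qed
    ultimately obtain C where C: "C \<in> components (V \<inter> box a b)" "y \<in> closure C" by blast
    have Csub: "C \<subseteq> V \<inter> box a b" using C(1) in_components_subset by blast
    have Ccon: "connected C" using C(1) in_components_connected by blast
    obtain c where c: "c \<in> C" using C(1) in_components_nonempty by blast
    have cM: "c \<in> M" using c Csub VM by blast
    have yM: "y \<in> closure M - M" using y frM by blast
    show ?thesis
    proof (intro exI[of _ "\<phi> c"] conjI allI impI)
      show "0 < \<phi> c" using pos cM .
      fix s assume s: "0 < s \<and> s < \<phi> c"
      have "eventually (\<lambda>x. dist (\<phi> x) 0 < s) (at y within M)"
        using lim0[OF yM] s tendstoD by blast
      then obtain d where d: "d > 0" "\<forall>x\<in>M. x \<noteq> y \<and> dist x y < d \<longrightarrow> dist (\<phi> x) 0 < s"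
        unfolding eventually_at by blast
      obtain c' where c': "c' \<in> C" "dist c' y < d"
        using C(2) d(1) closure_approachable by blast
      have c'M: "c' \<in> M" using c' Csub VM by blast
      have "c' \<noteq> y" using c'M yM by blast
      then have "\<phi> c' < s" using d(2) c' c'M by auto
      have "connected (\<phi> ` C)"
        using Ccon cont Csub VM by (meson connected_continuous_image continuous_on_subset le_infI1 order_trans)
      then have "{\<phi> c'..\<phi> c} \<subseteq> \<phi> ` C" using c c'(1) connected_contains_Icc by blast
      then have "s \<in> \<phi> ` C" using s \<open>\<phi> c' < s\<close> by auto
      then obtain v where v: "v \<in> C" "\<phi> v = s" by blast
      have "v \<in> V" "dist v y < e" using v Csub ab(1) by (auto simp: dist_commute)
      then show "\<exists>v\<in>V. \<phi> v = s \<and> dist v y < e" using v by blast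
    qed
  qed
  have keyB: "\<exists>m>0. \<forall>v\<in>V. \<phi> v < m \<longrightarrow> infdist v (fr V) < e" if e: "e > 0" for e
  proof -
    define K where "K = closure V \<inter> {x. e \<le> infdist x (fr V)}"
    have Kc: "compact K" unfolding K_def using bV
      by (intro compact_Int_closed) (auto intro!: closed_Collect_le continuous_intros)
    have KV: "K \<subseteq> V"
    proof
      fix x assume x: "x \<in> K"
      show "x \<in> V"
      proof (rule ccontr)
        assume "x \<notin> V"
        then have "x \<in> fr V" using x unfolding K_def fr_def by blast
        then have "infdist x (fr V) = 0" by simp
        then show False using x e unfolding K_def by simp
      qed
    qed
    show ?thesis
    proof (cases "K = {}")
      case True
      show ?thesis
      proof (intro exI[of _ 1] conjI ballI impI)
        fix v assume v: "v \<in> V"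
        then have "v \<in> closure V" using closure_subset by blast
        then show "infdist v (fr V) < e" using True unfolding K_def
          by (metis (mono_tags) IntI emptyE mem_Collect_eq not_le)
      qed simp
    next
      case False
      obtain x0 where x0: "x0 \<in> K" "\<forall>y\<in>K. \<phi> x0 \<le> \<phi> y"
      proof -
        have "continuous_on K \<phi>" by (rule continuous_on_subset[OF cont]) (use KV VM in blast)
        then show ?thesis using continuous_attains_inf[OF Kc False] that by blast
      qed
      show ?thesis
      proof (intro exI[of _ "\<phi> x0"] conjI ballI impI)
        show "0 < \<phi> x0" using x0(1) KV VM by (intro pos) blast
        fix v assume v: "v \<in> V" "\<phi> v < \<phi> x0"
        show "infdist v (fr V) < e"
        proof (rule ccontr)
          assume "\<not> infdist v (fr V) < e"
          then have "v \<in> K" unfolding K_def using v closure_subset by auto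
          then show False using x0 v by fastforce
        qed
      qed
    qed
  qed
  have ev: "eventually (\<lambda>k. r k < m) sequentially" if "m > 0" for m
    using assms(7) that by (metis (mono_tags, lifting) eventually_mono order_tendstoD(2))
  show ?thesis
  proof (cases "fr V = {}")
    case True
    have "closure V \<subseteq> V" using True unfolding fr_def by blast
    then have cV: "compact V" using bV closure_subset_eq compact_eq_bounded_closed by blast
    have "eventually (\<lambda>k. A k = {}) sequentially"
    proof (cases "V = {}")
      case True then show ?thesis unfolding A_def by simp
    next
      case False
      obtain x0 where x0: "x0 \<in> V" "\<forall>y\<in>V. \<phi> x0 \<le> \<phi> y"
      proof -
        have "continuous_on V \<phi>" by (rule continuous_on_subset[OF cont VM])
        then show ?thesis using continuous_attains_inf[OF cV False] that by blast
      qed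
      have "\<phi> x0 > 0" using x0(1) VM by (intro pos) blast
      from ev[OF this] show ?thesis
      proof eventually_elim
        case (elim k)
        show "A k = {}"
        proof (rule ccontr)
          assume "A k \<noteq> {}"
          then obtain v where "v \<in> V" "\<phi> v = r k" unfolding A_def by blast
          then show False using x0(2) elim by force
        qed
      qed
    qed
    then show ?thesis unfolding hausdorff_lim_def using True bA frc by (simp add: A_def)
  next
    case False
    then obtain y0 where y0: "y0 \<in> fr V" by blast
    have unifA: "\<exists>m>0. \<forall>s. 0 < s \<and> s < m \<longrightarrow> (\<forall>y\<in>fr V. \<exists>v\<in>V. \<phi> v = s \<and> dist v y < 2*e)"
      if e: "e > 0" for e
    proof -
      have cover: "fr V \<subseteq> (\<Union>c\<in>fr V. ball c e)" using e by force
      obtain D where D: "D \<subseteq> fr V" "finite D" "fr V \<subseteq> (\<Union>c\<in>D. ball c e)"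
        by (rule compactE_image[OF frc _ cover]) auto
      have "D \<noteq> {}" using D(3) y0 by blast
      have "\<forall>y\<in>D. \<exists>m>0. \<forall>s. 0 < s \<and> s < m \<longrightarrow> (\<exists>v\<in>V. \<phi> v = s \<and> dist v y < e)"
        using keyA e D(1) by blast
      then obtain mf where mf0: "\<forall>y\<in>D. mf y > 0 \<and> (\<forall>s. 0 < s \<and> s < mf y \<longrightarrow> (\<exists>v\<in>V. \<phi> v = s \<and> dist v y < e))"
        using bchoice[of D] by (metis (no_types, lifting))
      have mf: "\<And>y. y \<in> D \<Longrightarrow> mf y > 0 \<and> (\<forall>s. 0 < s \<and> s < mf y \<longrightarrow> (\<exists>v\<in>V. \<phi> v = s \<and> dist v y < e))"
        using mf0 by blast
      define m where "m = Min (mf ` D)"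
      have m: "m > 0" unfolding m_def using D(2) \<open>D \<noteq> {}\<close> mf by auto
      have mle: "\<And>y. y \<in> D \<Longrightarrow> m \<le> mf y" unfolding m_def using D(2) by auto
      show ?thesis
      proof (intro exI[of _ m] conjI allI impI ballI)
        show "0 < m" by (fact m)
        fix s y assume s: "0 < s \<and> s < m" and y: "y \<in> fr V"
        obtain d where d: "d \<in> D" "dist d y < e" using D(3) y by (auto simp: dist_commute)
        obtain v where v: "v \<in> V" "\<phi> v = s" "dist v d < e" using mf[OF d(1)] mle[OF d(1)] s by force
        have "dist v y \<le> dist v d + dist d y" by (rule dist_triangle)
        then show "\<exists>v\<in>V. \<phi> v = s \<and> dist v y < 2 * e" using v d by (intro bexI[of _ v]) auto
      qed
    qed
    have bound: "eventually (\<lambda>k. A k \<noteq> {} \<and> 0 \<le> hausdist (closure (A k)) (fr V) \<and> hausdist (closure (A k)) (fr V) \<le> 2*e) sequentially"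
      if e: "e > 0" for e
    proof -
      obtain m1 where m1: "m1 > 0" "\<forall>s. 0 < s \<and> s < m1 \<longrightarrow> (\<forall>y\<in>fr V. \<exists>v\<in>V. \<phi> v = s \<and> dist v y < 2*e)"
        using unifA e by blast
      obtain m2 where m2: "m2 > 0" "\<forall>v\<in>V. \<phi> v < m2 \<longrightarrow> infdist v (fr V) < e"
        using keyB e by blast
      have "min m1 m2 > 0" using m1 m2 by simp
      from ev[OF this] show ?thesis
      proof eventually_elim
        case (elim k)
        have rk: "0 < r k" by (rule assms(6))
        have "r k < m1" using elim by simp
        then obtain v0 where "v0 \<in> V" "\<phi> v0 = r k" using m1(2) rk y0 by blast
        then have ne: "A k \<noteq> {}" unfolding A_def by blast
        have h1: "\<forall>x\<in>closure (A k). infdist x (fr V) \<le> 2*e"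
        proof -
          have "A k \<subseteq> {x. infdist x (fr V) \<le> 2*e}"
          proof
            fix x assume "x \<in> A k"
            then have x: "x \<in> V" "\<phi> x = r k" by (auto simp: A_def)
            then have "infdist x (fr V) < e" using m2(2) elim by auto
            then show "x \<in> {x. infdist x (fr V) \<le> 2*e}" using e by simp
          qed
          moreover have "closed {x. infdist x (fr V) \<le> 2*e}"
            by (intro closed_Collect_le continuous_intros)
          ultimately show ?thesis using closure_minimal by blast
        qed
        have h2: "\<forall>y\<in>fr V. infdist y (closure (A k)) \<le> 2*e"
        proof
          fix y assume y: "y \<in> fr V"
          have "r k < m1" using elim by simp
          then have "\<forall>y\<in>fr V. \<exists>v\<in>V. \<phi> v = r k \<and> dist v y < 2*e" using m1(2) rk by blast
          then obtain v where v: "v \<in> V" "\<phi> v = r k" "dist v y < 2*e" using y by blast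
          have "v \<in> A k" using v by (simp add: A_def)
          then have "v \<in> closure (A k)" using closure_subset by blast
          then have "infdist y (closure (A k)) \<le> dist y v" by (rule infdist_le)
          then show "infdist y (closure (A k)) \<le> 2*e" using v by (simp add: dist_commute)
        qed
        have "closure (A k) \<noteq> {}" using ne by simp
        then show ?case using hausdist_le[OF _ False h1 h2] ne by blast
      qed
    qed
    have "((\<lambda>k. hausdist (closure (A k)) (fr V)) \<longlongrightarrow> 0) sequentially"
    proof (rule tendstoI)
      fix e :: real assume e: "e > 0"
      have "e/3 > 0" using e by simp
      from bound[OF this] show "eventually (\<lambda>k. dist (hausdist (closure (A k)) (fr V)) 0 < e) sequentially"
      proof eventually_elim
        case (elim k)
        then show ?case using e by (simp add: dist_real_def)
      qed
    qed
    moreover have "eventually (\<lambda>k. A k \<noteq> {}) sequentially"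
      using bound[of 1] by (simp add: eventually_conj_iff)
    ultimately show ?thesis unfolding hausdorff_lim_def using False bA frc by (simp add: A_def)
  qed
qed

end
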